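(* Let $C$ be a linear code over $\mathbb{Z}_4+u\mathbb{Z}_4$ generated by a matrix of the form $[I_n\,|\,A]$, where $A$ is an $n\times n$ matrix over $\mathbb{Z}_4+u\mathbb{Z}_4$. If $A$ is symmetric or circulant, then $C$ is formally self-dual, and hence $\phi(C)$ is a formally self-dual code over $\mathbb{Z}_4$ of length $4n$.
   Context: $\mathbb{Z}_4+u\mathbb{Z}_4$ is the commutative ring of characteristic $4$ with $u^2=0$. A linear code over a ring $R$ is an $R$-submodule of $R^N$; duals are taken with respect to the Euclidean inner product $\sum_i x_iy_i$ in $R$. Lee weight on $\mathbb{Z}_4$: $0,1,2,1$ for $0,1,2,3$; on $\mathbb{Z}_4+u\mathbb{Z}_4$: $w_L(a+ub)=w_L(b)+w_L(a+b)$; extended additively to vectors. A linear code (over either ring) is formally self-dual if it has the same Lee weight enumerator as its dual. The Gray map $\phi:(\mathbb{Z}_4+u\mathbb{Z}_4)^{N}\to\mathbb{Z}_4^{2N}$ is $\phi(\overline{a}+u\overline{b})=(\overline{b},\overline{a}+\overline{b})$ for $\overline{a},\overline{b}\in\mathbb{Z}_4^N$. A circulant matrix is one in which each row is the cyclic right shift of the previous row. *)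

theory Defs
  imports Main "HOL-Library.Numeral_Type" "HOL-Library.Product_Plus"
begin

text \<open>Z4 is the type 4 (integers mod 4). An element a + u b of Z4 + uZ4 is
represented by the pair (a, b) :: 4 \<times> 4; addition is componentwise
(Product_Plus), multiplication uses u^2 = 0.\<close>

type_synonym R = "4 \<times> 4"

definition rmul :: "R \<Rightarrow> R \<Rightarrow> R" where
  "rmul x y = (fst x * fst y, fst x * snd y + snd x * fst y)"

definition linear_code_R :: "nat \<Rightarrow> R list set \<Rightarrow> bool" where
  "linear_code_R N C \<longleftrightarrow> C \<subseteq> {v. length v = N} \<and> C \<noteq> {} \<and>
     (\<forall>x\<in>C. \<forall>y\<in>C. map2 (+) x y \<in> C) \<and>
     (\<forall>r. \<forall>x\<in>C. map (rmul r) x \<in> C)"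

definition linear_code_Z4 :: "nat \<Rightarrow> 4 list set \<Rightarrow> bool" where
  "linear_code_Z4 N C \<longleftrightarrow> C \<subseteq> {v. length v = N} \<and> C \<noteq> {} \<and>
     (\<forall>x\<in>C. \<forall>y\<in>C. map2 (+) x y \<in> C) \<and>
     (\<forall>r. \<forall>x\<in>C. map ((*) r) x \<in> C)"

definition dual_R :: "nat \<Rightarrow> R list set \<Rightarrow> R list set" where
  "dual_R N C = {y. length y = N \<and> (\<forall>x\<in>C. sum_list (map2 rmul x y) = 0)}"

definition dual_Z4 :: "nat \<Rightarrow> 4 list set \<Rightarrow> 4 list set" where
  "dual_Z4 N C = {y. length y = N \<and> (\<forall>x\<in>C. sum_list (map2 (*) x y) = 0)}"

definition lee_Z4 :: "4 \<Rightarrow> nat" where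
  "lee_Z4 x = (if x = 0 then 0 else if x = 2 then 2 else 1)"

definition lee_R :: "R \<Rightarrow> nat" where
  "lee_R x = lee_Z4 (snd x) + lee_Z4 (fst x + snd x)"

definition lee_wt_R :: "R list \<Rightarrow> nat" where
  "lee_wt_R v = sum_list (map lee_R v)"

definition lee_wt_Z4 :: "4 list \<Rightarrow> nat" where
  "lee_wt_Z4 v = sum_list (map lee_Z4 v)"

definition formally_self_dual_R :: "nat \<Rightarrow> R list set \<Rightarrow> bool" where
  "formally_self_dual_R N C \<longleftrightarrow> linear_code_R N C \<and>
     (\<forall>w. card {c\<in>C. lee_wt_R c = w} = card {c\<in>dual_R N C. lee_wt_R c = w})"

definition formally_self_dual_Z4 :: "nat \<Rightarrow> 4 list set \<Rightarrow> bool" where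
  "formally_self_dual_Z4 N C \<longleftrightarrow> linear_code_Z4 N C \<and>
     (\<forall>w. card {c\<in>C. lee_wt_Z4 c = w} = card {c\<in>dual_Z4 N C. lee_wt_Z4 c = w})"

definition gray :: "R list \<Rightarrow> 4 list" where
  "gray v = map snd v @ map (\<lambda>x. fst x + snd x) v"

definition generated_code_R :: "nat \<Rightarrow> nat \<Rightarrow> (nat \<Rightarrow> nat \<Rightarrow> R) \<Rightarrow> R list set" where
  "generated_code_R k N G =
     {map (\<lambda>j. \<Sum>i<k. rmul (x i) (G i j)) [0..<N] | x. True}"

definition id_concat :: "nat \<Rightarrow> (nat \<Rightarrow> nat \<Rightarrow> R) \<Rightarrow> nat \<Rightarrow> nat \<Rightarrow> R" where
  "id_concat n A i j = (if j < n then (if i = j then (1, 0) else 0) else A i (j - n))"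

definition symmetric_mat :: "nat \<Rightarrow> (nat \<Rightarrow> nat \<Rightarrow> R) \<Rightarrow> bool" where
  "symmetric_mat n A \<longleftrightarrow> (\<forall>i<n. \<forall>j<n. A i j = A j i)"

definition circulant_mat :: "nat \<Rightarrow> (nat \<Rightarrow> nat \<Rightarrow> R) \<Rightarrow> bool" where
  "circulant_mat n A \<longleftrightarrow> (\<forall>i j. i + 1 < n \<and> j < n \<longrightarrow> A (i + 1) ((j + 1) mod n) = A i j)"

end

theory Submission
  imports Defs
begin


lemma four_cases: "(x::4) = 0 \<or> x = 1 \<or> x = 2 \<or> x = 3"
proof (cases x)
  case (of_int z)
  then have "z = 0 \<or> z = 1 \<or> z = 2 \<or> z = 3" by auto
  then show ?thesis using of_int by auto
qed

lemma lee_Z4_neg[simp]: "lee_Z4 (- x) = lee_Z4 x"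
  using four_cases[of x] by (auto simp: lee_Z4_def)

lemma lee_R_neg[simp]: "lee_R (- x) = lee_R x"
  unfolding lee_R_def snd_uminus fst_uminus minus_add_distrib[symmetric] lee_Z4_neg ..

lemma rmul_comm: "rmul x y = rmul y x" by (simp add: rmul_def algebra_simps)
lemma rmul_assoc: "rmul (rmul x y) z = rmul x (rmul y z)" by (simp add: rmul_def algebra_simps)
lemma rmul_add_left: "rmul (x + y) z = rmul x z + rmul y z" by (simp add: rmul_def algebra_simps)
lemma rmul_add_right: "rmul z (x + y) = rmul z x + rmul z y" by (simp add: rmul_def algebra_simps)
lemma rmul_zero_left[simp]: "rmul 0 x = 0" by (simp add: rmul_def prod_eq_iff)
lemma rmul_zero_right[simp]: "rmul x 0 = 0" by (simp add: rmul_def prod_eq_iff)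
lemma rmul_one_left[simp]: "rmul (1,0) x = x" by (simp add: rmul_def prod_eq_iff)
lemma rmul_one_right[simp]: "rmul x (1,0) = x" by (simp add: rmul_def prod_eq_iff)
lemma rmul_neg_right: "rmul x (- y) = - rmul x y" by (simp add: rmul_def algebra_simps)
lemma rmul_sum_right: "rmul r (sum f S) = (\<Sum>i\<in>S. rmul r (f i))"
  by (induct S rule: infinite_finite_induct) (auto simp: rmul_add_right)
lemma rmul_sum_left: "rmul (sum f S) r = (\<Sum>i\<in>S. rmul (f i) r)"
  by (induct S rule: infinite_finite_induct) (auto simp: rmul_add_left)

lemma sl_map: "sum_list (map f [0..<n]) = (\<Sum>i<n. f i)"
  by (induct n) auto
lemma sl_map2: "sum_list (map2 f (map g [0..<n]) (map h [0..<n])) = (\<Sum>i<n. f (g i) (h i))"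
  by (induct n) auto

lemma sum_pi: "\<forall>i<n. \<pi> i < n \<and> \<pi> (\<pi> i) = i \<Longrightarrow> (\<Sum>i<n. g (\<pi> i)) = (\<Sum>i<n. g i)"
  by (rule sum.reindex_bij_witness[where i=\<pi> and j=\<pi>]) auto

lemma sum_delta_pair: "i0 < (n::nat) \<Longrightarrow> (\<Sum>i<n. (if i = i0 then c else 0) * f i + (if i = i0 then d else 0) * g i) = c * f i0 + d * (g i0 :: 4)"
proof -
  assume "i0 < n"
  have "(\<Sum>i<n. (if i = i0 then c else 0) * f i + (if i = i0 then d else 0) * g i) = (\<Sum>i<n. if i = i0 then c * f i + d * g i else 0)"
    by (rule sum.cong) auto
  also have "\<dots> = c * f i0 + d * g i0" using \<open>i0 < n\<close> by (subst sum.delta[OF finite_lessThan]) auto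
  finally show ?thesis .
qed

definition trn :: "nat \<Rightarrow> (nat \<Rightarrow> 'a::zero) \<Rightarrow> nat \<Rightarrow> 'a" where
  "trn n f i = (if i < n then f i else 0)"
definition Uset :: "nat \<Rightarrow> (nat \<Rightarrow> 'a::zero) set" where "Uset n = {x. \<forall>i\<ge>n. x i = 0}"

lemma trn_U[simp]: "trn n f \<in> Uset n" by (simp add: trn_def Uset_def)

definition vm :: "nat \<Rightarrow> (nat \<Rightarrow> R) \<Rightarrow> (nat \<Rightarrow> nat \<Rightarrow> R) \<Rightarrow> nat \<Rightarrow> R" where
  "vm n x A k = (\<Sum>i<n. rmul (x i) (A i k))"
definition mv :: "nat \<Rightarrow> (nat \<Rightarrow> nat \<Rightarrow> R) \<Rightarrow> (nat \<Rightarrow> R) \<Rightarrow> nat \<Rightarrow> R" where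
  "mv n A y i = (\<Sum>j<n. rmul (A i j) (y j))"
definition Fc :: "nat \<Rightarrow> (nat \<Rightarrow> nat \<Rightarrow> R) \<Rightarrow> (nat \<Rightarrow> R) \<Rightarrow> R list" where
  "Fc n A x = map x [0..<n] @ map (vm n x A) [0..<n]"
definition Gd :: "nat \<Rightarrow> (nat \<Rightarrow> nat \<Rightarrow> R) \<Rightarrow> (nat \<Rightarrow> R) \<Rightarrow> R list" where
  "Gd n A y = map (\<lambda>i. - mv n A y i) [0..<n] @ map y [0..<n]"

lemma vm_trn[simp]: "vm n (trn n x) A = vm n x A"
  unfolding vm_def trn_def by (intro ext sum.cong) auto
lemma mv_trn[simp]: "mv n A (trn n y) = mv n A y"
  unfolding mv_def trn_def by (intro ext sum.cong) auto
lemma Fc_trn[simp]: "Fc n A (trn n x) = Fc n A x"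
  unfolding Fc_def by (simp add: trn_def)
lemma Gd_trn[simp]: "Gd n A (trn n x) = Gd n A x"
  unfolding Gd_def by (simp add: trn_def)

lemma length_Fc[simp]: "length (Fc n A x) = 2 * n" by (simp add: Fc_def)
lemma length_Gd[simp]: "length (Gd n A x) = 2 * n" by (simp add: Gd_def)

lemma nth_Fc1: "i < n \<Longrightarrow> Fc n A x ! i = x i" by (simp add: Fc_def nth_append)
lemma nth_Fc2: "i < n \<Longrightarrow> Fc n A x ! (n + i) = vm n x A i" by (simp add: Fc_def nth_append)
lemma nth_Gd1: "i < n \<Longrightarrow> Gd n A x ! i = - mv n A x i" by (simp add: Gd_def nth_append)
lemma nth_Gd2: "i < n \<Longrightarrow> Gd n A x ! (n + i) = x i" by (simp add: Gd_def nth_append)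

lemma range_Fc: "range (Fc n A) = Fc n A ` Uset n"
proof
  show "range (Fc n A) \<subseteq> Fc n A ` Uset n"
  proof clarify
    fix x have "Fc n A x = Fc n A (trn n x)" by simp
    then show "Fc n A x \<in> Fc n A ` Uset n" using trn_U[of n x] by blast
  qed
qed auto

lemma U_eqI: "x \<in> Uset n \<Longrightarrow> y \<in> Uset n \<Longrightarrow> (\<And>i. i < n \<Longrightarrow> x i = y i) \<Longrightarrow> x = y"
proof (rule ext)
  fix i assume a: "x \<in> Uset n" "y \<in> Uset n" "\<And>i. i < n \<Longrightarrow> x i = y i"
  show "x i = y i"
  proof (cases "i < n")
    case True then show ?thesis using a by simp
  next
    case False then show ?thesis using a by (simp add: Uset_def)
  qed
qed

lemma inj_Fc: "inj_on (Fc n A) (Uset n)"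
proof (rule inj_onI)
  fix x y assume a: "x \<in> Uset n" "y \<in> Uset n" and e: "Fc n A x = Fc n A y"
  have "x i = y i" if "i < n" for i using nth_Fc1[OF that, of A x] nth_Fc1[OF that, of A y] e by simp
  then show "x = y" using a by (intro U_eqI) auto
qed

lemma inj_Gd: "inj_on (Gd n A) (Uset n)"
proof (rule inj_onI)
  fix x y assume a: "x \<in> Uset n" "y \<in> Uset n" and e: "Gd n A x = Gd n A y"
  have "x i = y i" if "i < n" for i using nth_Gd2[OF that, of A x] nth_Gd2[OF that, of A y] e by simp
  then show "x = y" using a by (intro U_eqI) auto
qed

lemma code_eq: "generated_code_R n (2 * n) (id_concat n A) = range (Fc n A)"
proof -
  have "map (\<lambda>j. \<Sum>i<n. rmul (x i) (id_concat n A i j)) [0..<2*n] = Fc n A x" for x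
  proof (rule nth_equalityI)
    show "length (map (\<lambda>j. \<Sum>i<n. rmul (x i) (id_concat n A i j)) [0..<2*n]) = length (Fc n A x)" by simp
    fix j assume "j < length (map (\<lambda>j. \<Sum>i<n. rmul (x i) (id_concat n A i j)) [0..<2*n])"
    then have j: "j < 2 * n" by simp
    show "map (\<lambda>j. \<Sum>i<n. rmul (x i) (id_concat n A i j)) [0..<2*n] ! j = Fc n A x ! j"
    proof (cases "j < n")
      case True
      have "(\<Sum>i<n. rmul (x i) (id_concat n A i j)) = (\<Sum>i<n. if i = j then x i else 0)"
        by (rule sum.cong) (auto simp: id_concat_def True)
      then show ?thesis using True j by (simp add: nth_Fc1)
    next
      case False
      then obtain k where k: "j = n + k" "k < n" using j by (intro that[of "j - n"]) auto
      have "(\<Sum>i<n. rmul (x i) (id_concat n A i j)) = vm n x A k"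
        unfolding vm_def by (rule sum.cong) (auto simp: id_concat_def k)
      then show ?thesis using k j by (simp add: nth_Fc2)
    qed
  qed
  then show ?thesis unfolding generated_code_R_def by auto
qed

lemma dot_R:
  assumes "length y = 2 * n"
  shows "sum_list (map2 rmul (Fc n A x) y) = (\<Sum>i<n. rmul (x i) (y ! i + mv n A (\<lambda>k. y ! (n + k)) i))"
proof -
  have y: "y = map (\<lambda>i. y ! i) [0..<n] @ map (\<lambda>k. y ! (n + k)) [0..<n]"
    by (rule nth_equalityI) (auto simp: assms nth_append)
  have "sum_list (map2 rmul (Fc n A x) y) = (\<Sum>i<n. rmul (x i) (y ! i)) + (\<Sum>k<n. rmul (vm n x A k) (y ! (n + k)))"
    by (subst y) (simp add: Fc_def sl_map2)
  also have "(\<Sum>k<n. rmul (vm n x A k) (y ! (n + k))) = (\<Sum>i<n. rmul (x i) (mv n A (\<lambda>k. y ! (n + k)) i))"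
    by (simp add: vm_def mv_def rmul_sum_left rmul_sum_right rmul_assoc) (rule sum.swap)
  finally show ?thesis by (simp add: sum.distrib[symmetric] rmul_add_right)
qed

lemma dual_R_eq: "dual_R (2 * n) (range (Fc n A)) = Gd n A ` Uset n"
proof
  show "dual_R (2 * n) (range (Fc n A)) \<subseteq> Gd n A ` Uset n"
  proof
    fix y assume "y \<in> dual_R (2 * n) (range (Fc n A))"
    then have len: "length y = 2 * n" and orth: "\<And>x. sum_list (map2 rmul (Fc n A x) y) = 0"
      by (auto simp: dual_R_def)
    define y2 where "y2 = trn n (\<lambda>k. y ! (n + k))"
    have key: "y ! i0 = - mv n A y2 i0" if "i0 < n" for i0
    proof -
      let ?x = "\<lambda>i. if i = i0 then (1::4, 0::4) else 0"
      have "0 = (\<Sum>i<n. rmul (?x i) (y ! i + mv n A (\<lambda>k. y ! (n + k)) i))"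
        using orth[of ?x] dot_R[OF len] by simp
      also have "\<dots> = (\<Sum>i<n. if i = i0 then y ! i + mv n A (\<lambda>k. y ! (n + k)) i else 0)"
        by (rule sum.cong) auto
      also have "\<dots> = y ! i0 + mv n A y2 i0" using that by (subst sum.delta[OF finite_lessThan]) (auto simp: y2_def)
      finally show ?thesis by (simp add: eq_neg_iff_add_eq_0)
    qed
    have "y = Gd n A y2"
    proof (rule nth_equalityI)
      show "length y = length (Gd n A y2)" using len by simp
      fix i assume "i < length y"
      then have i: "i < 2 * n" using len by simp
      show "y ! i = Gd n A y2 ! i"
      proof (cases "i < n")
        case True then show ?thesis using key[OF True] nth_Gd1[OF True, of A y2] by simp
      next
        case False
        then obtain k where k: "i = n + k" "k < n" using i by (intro that[of "i - n"]) auto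
        then show ?thesis using nth_Gd2[OF k(2), of A y2] by (simp add: y2_def trn_def)
      qed
    qed
    moreover have "y2 \<in> Uset n" by (simp add: y2_def)
    ultimately show "y \<in> Gd n A ` Uset n" by blast
  qed
next
  show "Gd n A ` Uset n \<subseteq> dual_R (2 * n) (range (Fc n A))"
  proof clarify
    fix y :: "nat \<Rightarrow> R" assume "y \<in> Uset n"
    have e: "mv n A (\<lambda>k. Gd n A y ! (n + k)) = mv n A y"
      unfolding mv_def by (intro ext sum.cong) (auto simp: nth_Gd2)
    have "sum_list (map2 rmul (Fc n A x) (Gd n A y)) = 0" for x
    proof -
      have "sum_list (map2 rmul (Fc n A x) (Gd n A y)) = (\<Sum>i<n. rmul (x i) (Gd n A y ! i + mv n A y i))"
        by (simp add: dot_R e)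
      also have "\<dots> = (\<Sum>i<n. 0)" by (rule sum.cong) (simp_all add: nth_Gd1)
      finally show ?thesis by simp
    qed
    then show "Gd n A y \<in> dual_R (2 * n) (range (Fc n A))"
      unfolding dual_R_def by auto
  qed
qed

lemma map2_Fc: "map2 (+) (Fc n A x) (Fc n A y) = Fc n A (\<lambda>i. x i + y i)"
proof -
  have "vm n (\<lambda>i. x i + y i) A k = vm n x A k + vm n y A k" for k
    by (simp add: vm_def rmul_add_left sum.distrib)
  then show ?thesis by (intro nth_equalityI) (auto simp: Fc_def nth_append)
qed

lemma smul_Fc: "map (rmul r) (Fc n A x) = Fc n A (\<lambda>i. rmul r (x i))"
proof -
  have "rmul r (vm n x A k) = vm n (\<lambda>i. rmul r (x i)) A k" for k
    by (simp add: vm_def rmul_sum_right rmul_assoc)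
  then show ?thesis by (simp add: Fc_def)
qed

lemma lin_R: "linear_code_R (2 * n) (range (Fc n A))"
  unfolding linear_code_R_def by (auto simp: map2_Fc smul_Fc)

definition tsim :: "nat \<Rightarrow> (nat \<Rightarrow> nat \<Rightarrow> R) \<Rightarrow> (nat \<Rightarrow> nat) \<Rightarrow> bool" where
  "tsim n A \<pi> \<longleftrightarrow> (\<forall>i<n. \<pi> i < n \<and> \<pi> (\<pi> i) = i) \<and> (\<forall>i<n. \<forall>j<n. A (\<pi> i) (\<pi> j) = A j i)"

lemma mv_pi:
  assumes "tsim n A \<pi>" "i < n"
  shows "mv n A (\<lambda>j. x (\<pi> j)) i = vm n x A (\<pi> i)"
proof -
  have p: "\<forall>i<n. \<pi> i < n \<and> \<pi> (\<pi> i) = i" using assms by (simp add: tsim_def)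
  have "mv n A (\<lambda>j. x (\<pi> j)) i = (\<Sum>j<n. rmul (A i (\<pi> (\<pi> j))) (x (\<pi> j)))"
    unfolding mv_def by (rule sum.cong) (auto simp: p)
  also have "\<dots> = (\<Sum>j<n. rmul (A i (\<pi> j)) (x j))"
    by (rule sum_pi[OF p, where g="\<lambda>j. rmul (A i (\<pi> j)) (x j)"])
  also have "\<dots> = (\<Sum>j<n. rmul (x j) (A j (\<pi> i)))"
  proof (rule sum.cong)
    fix j assume "j \<in> {..<n}"
    then have "A i (\<pi> j) = A (\<pi> (\<pi> i)) (\<pi> j)" using p assms by simp
    also have "\<dots> = A j (\<pi> i)" using assms \<open>j \<in> {..<n}\<close> p by (auto simp: tsim_def)
    finally show "rmul (A i (\<pi> j)) (x j) = rmul (x j) (A j (\<pi> i))" by (simp add: rmul_comm)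
  qed simp
  finally show ?thesis by (simp add: vm_def)
qed

lemma lee_wt_R_append[simp]: "lee_wt_R (xs @ ys) = lee_wt_R xs + lee_wt_R ys"
  by (simp add: lee_wt_R_def)
lemma lee_wt_R_map: "lee_wt_R (map f [0..<n]) = (\<Sum>i<n. lee_R (f i))"
  by (simp add: lee_wt_R_def sl_map[symmetric] o_def)

lemma wt_R_pi:
  assumes "tsim n A \<pi>"
  shows "lee_wt_R (Gd n A (trn n (\<lambda>i. x (\<pi> i)))) = lee_wt_R (Fc n A x)"
proof -
  have p: "\<forall>i<n. \<pi> i < n \<and> \<pi> (\<pi> i) = i" using assms by (simp add: tsim_def)
  have "(\<Sum>i<n. lee_R (mv n A (\<lambda>i. x (\<pi> i)) i)) = (\<Sum>i<n. lee_R (vm n x A (\<pi> i)))"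
    by (rule sum.cong) (auto simp: mv_pi[OF assms])
  also have "\<dots> = (\<Sum>i<n. lee_R (vm n x A i))" by (rule sum_pi[OF p])
  finally have 1: "(\<Sum>i<n. lee_R (mv n A (\<lambda>i. x (\<pi> i)) i)) = (\<Sum>i<n. lee_R (vm n x A i))" .
  have 2: "(\<Sum>i<n. lee_R (x (\<pi> i))) = (\<Sum>i<n. lee_R (x i))" by (rule sum_pi[OF p])
  have "lee_wt_R (Gd n A (\<lambda>i. x (\<pi> i))) = lee_wt_R (Fc n A x)"
    unfolding Gd_def Fc_def by (simp only: lee_wt_R_append lee_wt_R_map 1 2 lee_R_neg)
  then show ?thesis by simp
qed

lemma card_transfer:
  assumes "inj_on F U" "inj_on G V" "bij_betw p U V" "\<forall>u\<in>U. wt2 (G (p u)) = wt1 (F u)"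
  shows "card {c \<in> F ` U. wt1 c = w} = card {c \<in> G ` V. wt2 c = w}"
proof -
  have "{c \<in> F ` U. wt1 c = w} = F ` {u\<in>U. wt1 (F u) = w}" by auto
  moreover have "inj_on F {u\<in>U. wt1 (F u) = w}" using assms(1) by (rule inj_on_subset) auto
  ultimately have 1: "card {c \<in> F ` U. wt1 c = w} = card {u\<in>U. wt1 (F u) = w}" by (simp add: card_image)
  have "{c \<in> G ` V. wt2 c = w} = G ` {v\<in>V. wt2 (G v) = w}" by auto
  moreover have "inj_on G {v\<in>V. wt2 (G v) = w}" using assms(2) by (rule inj_on_subset) auto
  ultimately have 2: "card {c \<in> G ` V. wt2 c = w} = card {v\<in>V. wt2 (G v) = w}" by (simp add: card_image)
  have "{v\<in>V. wt2 (G v) = w} = p ` {u\<in>U. wt1 (F u) = w}"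
  proof -
    have "{v\<in>V. wt2 (G v) = w} = p ` {u\<in>U. wt2 (G (p u)) = w}"
      using assms(3) unfolding bij_betw_def by auto
    also have "{u\<in>U. wt2 (G (p u)) = w} = {u\<in>U. wt1 (F u) = w}" using assms(4) by auto
    finally show ?thesis .
  qed
  moreover have "inj_on p {u\<in>U. wt1 (F u) = w}" using assms(3) unfolding bij_betw_def
    by (rule inj_on_subset[OF conjunct1]) auto
  ultimately have 3: "card {v\<in>V. wt2 (G v) = w} = card {u\<in>U. wt1 (F u) = w}" by (simp add: card_image)
  show ?thesis using 1 2 3 by simp
qed


lemma fsd_R:
  assumes "tsim n A \<pi>"
  shows "formally_self_dual_R (2 * n) (range (Fc n A))"
proof -
  have p: "\<forall>i<n. \<pi> i < n \<and> \<pi> (\<pi> i) = i" using assms by (simp add: tsim_def)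
  define q where "q = (\<lambda>x. trn n (\<lambda>i. x (\<pi> i)) :: nat \<Rightarrow> R)"
  have qU: "q x \<in> Uset n" for x by (simp add: q_def)
  have qq: "q (q x) = x" if "x \<in> Uset n" for x
  proof (rule U_eqI[OF qU that])
    fix i assume "i < n"
    then show "q (q x) i = x i" using p by (simp add: q_def trn_def)
  qed
  have bij: "bij_betw q (Uset n) (Uset n)"
    by (rule bij_betw_byWitness[where f'=q]) (simp_all add: qq qU image_subset_iff)
  have wq: "\<forall>u\<in>Uset n. lee_wt_R (Gd n A (q u)) = lee_wt_R (Fc n A u)"
    unfolding q_def by (intro ballI wt_R_pi[OF assms])
  show ?thesis unfolding formally_self_dual_R_def
  proof (intro conjI allI)
    show "linear_code_R (2 * n) (range (Fc n A))" by (rule lin_R)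
    fix w
    show "card {c \<in> range (Fc n A). lee_wt_R c = w} = card {c \<in> dual_R (2 * n) (range (Fc n A)). lee_wt_R c = w}"
      unfolding dual_R_eq unfolding range_Fc
      by (rule card_transfer[of "Fc n A" "Uset n" "Gd n A" "Uset n" q lee_wt_R lee_wt_R, OF inj_Fc inj_Gd bij wq])
  qed
qed



lemma length_gray[simp]: "length (gray v) = 2 * length v" by (simp add: gray_def)

lemma lee_wt_gray: "lee_wt_Z4 (gray v) = lee_wt_R v"
  by (simp add: gray_def lee_wt_Z4_def lee_wt_R_def lee_R_def[abs_def] sum_list_addf o_def)

lemma gray_add: "length x = length y \<Longrightarrow> map2 (+) (gray x) (gray y) = gray (map2 (+) x y)"
  by (rule nth_equalityI) (auto simp: gray_def nth_append)

lemma gray_smul: "map ((*) r) (gray x) = gray (map (rmul (r, 0)) x)"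
  by (simp add: gray_def rmul_def o_def distrib_left)

lemma lin_gray: "linear_code_R N C \<Longrightarrow> linear_code_Z4 (2 * N) (gray ` C)"
  unfolding linear_code_R_def linear_code_Z4_def
proof (intro conjI ballI allI)
  assume a: "C \<subseteq> {v. length v = N} \<and> C \<noteq> {} \<and> (\<forall>x\<in>C. \<forall>y\<in>C. map2 (+) x y \<in> C) \<and> (\<forall>r. \<forall>x\<in>C. map (rmul r) x \<in> C)"
  show "gray ` C \<subseteq> {v. length v = 2 * N}" using a by auto
  show "gray ` C \<noteq> {}" using a by auto
  fix x y assume "x \<in> gray ` C" "y \<in> gray ` C"
  then obtain x' y' where e: "x = gray x'" "y = gray y'" and m: "x' \<in> C" "y' \<in> C" by auto
  have l: "length x' = length y'" using a m by auto
  have "map2 (+) x' y' \<in> C" using a m by auto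
  then show "map2 (+) x y \<in> gray ` C" using gray_add[OF l] e by auto
next
  fix r :: 4 and x
  assume a: "C \<subseteq> {v. length v = N} \<and> C \<noteq> {} \<and> (\<forall>x\<in>C. \<forall>y\<in>C. map2 (+) x y \<in> C) \<and> (\<forall>r. \<forall>x\<in>C. map (rmul r) x \<in> C)"
    and "x \<in> gray ` C"
  then obtain x' where "x = gray x'" "x' \<in> C" by auto
  then show "map ((*) r) x \<in> gray ` C" using a gray_smul[of r x'] by auto
qed

definition Sa :: "nat \<Rightarrow> (nat \<Rightarrow> nat \<Rightarrow> R) \<Rightarrow> (nat \<Rightarrow> 4) \<Rightarrow> (nat \<Rightarrow> 4) \<Rightarrow> nat \<Rightarrow> 4" where
  "Sa n A w2 w4 i = (\<Sum>j<n. fst (A i j) * w2 j + fst (A i j) * w4 j)"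
definition Sb :: "nat \<Rightarrow> (nat \<Rightarrow> nat \<Rightarrow> R) \<Rightarrow> (nat \<Rightarrow> 4) \<Rightarrow> (nat \<Rightarrow> 4) \<Rightarrow> nat \<Rightarrow> 4" where
  "Sb n A w2 w4 i = (\<Sum>j<n. snd (A i j) * w2 j + (fst (A i j) + snd (A i j)) * w4 j)"
definition Hd :: "nat \<Rightarrow> (nat \<Rightarrow> nat \<Rightarrow> R) \<Rightarrow> (nat \<Rightarrow> 4) \<Rightarrow> (nat \<Rightarrow> 4) \<Rightarrow> 4 list" where
  "Hd n A w2 w4 = map (\<lambda>i. Sb n A w2 w4 i - Sa n A w2 w4 i) [0..<n] @ map w2 [0..<n] @
     map (\<lambda>i. - Sb n A w2 w4 i) [0..<n] @ map w4 [0..<n]"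

lemma Sa_trn[simp]: "Sa n A (trn n w2) (trn n w4) = Sa n A w2 w4"
  unfolding Sa_def trn_def by (intro ext sum.cong) auto
lemma Sb_trn[simp]: "Sb n A (trn n w2) (trn n w4) = Sb n A w2 w4"
  unfolding Sb_def trn_def by (intro ext sum.cong) auto
lemma Hd_trn[simp]: "Hd n A (trn n w2) (trn n w4) = Hd n A w2 w4"
  unfolding Hd_def by (simp add: trn_def)

lemma length_Hd[simp]: "length (Hd n A w2 w4) = 4 * n" by (simp add: Hd_def)
lemma nth_Hd2: "i < n \<Longrightarrow> Hd n A w2 w4 ! (n + i) = w2 i" by (simp add: Hd_def nth_append)
lemma nth_Hd4: "i < n \<Longrightarrow> Hd n A w2 w4 ! (3 * n + i) = w4 i" by (simp add: Hd_def nth_append)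

lemma dot_Z4:
  "sum_list (map2 (*) (gray (Fc n A x)) (map w1 [0..<n] @ map w2 [0..<n] @ map w3 [0..<n] @ map w4 [0..<n]))
   = (\<Sum>i<n. snd (x i) * (w1 i + w3 i + Sa n A w2 w4 i) + fst (x i) * (w3 i + Sb n A w2 w4 i))"
proof -
  have g: "gray (Fc n A x) = map (\<lambda>i. snd (x i)) [0..<n] @ map (\<lambda>k. snd (vm n x A k)) [0..<n] @
     map (\<lambda>i. fst (x i) + snd (x i)) [0..<n] @ map (\<lambda>k. fst (vm n x A k) + snd (vm n x A k)) [0..<n]"
    by (simp add: gray_def Fc_def)
  have 1: "sum_list (map2 (*) (gray (Fc n A x)) (map w1 [0..<n] @ map w2 [0..<n] @ map w3 [0..<n] @ map w4 [0..<n]))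
    = (\<Sum>i<n. snd (x i) * w1 i) + ((\<Sum>k<n. snd (vm n x A k) * w2 k) + ((\<Sum>i<n. (fst (x i) + snd (x i)) * w3 i)
       + (\<Sum>k<n. (fst (vm n x A k) + snd (vm n x A k)) * w4 k)))"
    unfolding g by (simp add: sl_map2)
  have v2: "(\<Sum>k<n. snd (vm n x A k) * w2 k) = (\<Sum>i<n. \<Sum>k<n. (fst (x i) * snd (A i k) + snd (x i) * fst (A i k)) * w2 k)"
    by (simp add: vm_def snd_sum rmul_def sum_distrib_right) (rule sum.swap)
  have fs: "fst (vm n x A k) + snd (vm n x A k) = (\<Sum>i<n. fst (x i) * fst (A i k) + (fst (x i) * snd (A i k) + snd (x i) * fst (A i k)))" for k
    by (simp add: vm_def fst_sum snd_sum rmul_def sum.distrib)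
  have v4: "(\<Sum>k<n. (fst (vm n x A k) + snd (vm n x A k)) * w4 k) = (\<Sum>i<n. \<Sum>k<n. (fst (x i) * fst (A i k) + (fst (x i) * snd (A i k) + snd (x i) * fst (A i k))) * w4 k)"
    unfolding fs by (simp add: sum_distrib_right) (rule sum.swap)
  have per: "snd (x i) * w1 i + ((\<Sum>k<n. (fst (x i) * snd (A i k) + snd (x i) * fst (A i k)) * w2 k)
      + ((fst (x i) + snd (x i)) * w3 i + (\<Sum>k<n. (fst (x i) * fst (A i k) + (fst (x i) * snd (A i k) + snd (x i) * fst (A i k))) * w4 k)))
      = snd (x i) * (w1 i + w3 i + Sa n A w2 w4 i) + fst (x i) * (w3 i + Sb n A w2 w4 i)" for i
  proof -
    let ?S1 = "(\<Sum>k<n. (fst (x i) * snd (A i k) + snd (x i) * fst (A i k)) * w2 k)"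
    let ?S2 = "(\<Sum>k<n. (fst (x i) * fst (A i k) + (fst (x i) * snd (A i k) + snd (x i) * fst (A i k))) * w4 k)"
    have h: "?S1 + ?S2 = snd (x i) * Sa n A w2 w4 i + fst (x i) * Sb n A w2 w4 i"
      unfolding Sa_def Sb_def sum_distrib_left sum.distrib[symmetric]
      by (rule sum.cong) (simp_all add: algebra_simps)
    have "snd (x i) * w1 i + (?S1 + ((fst (x i) + snd (x i)) * w3 i + ?S2)) = snd (x i) * w1 i + (fst (x i) + snd (x i)) * w3 i + (?S1 + ?S2)"
      by (simp add: algebra_simps)
    also have "\<dots> = snd (x i) * (w1 i + w3 i + Sa n A w2 w4 i) + fst (x i) * (w3 i + Sb n A w2 w4 i)"
      unfolding h by (simp add: algebra_simps)
    finally show ?thesis .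
  qed
  show ?thesis unfolding 1 v2 v4 sum.distrib[symmetric] per ..
qed



lemma dual_Z4_eq: "dual_Z4 (4 * n) (gray ` range (Fc n A)) = (\<lambda>(w2, w4). Hd n A w2 w4) ` (Uset n \<times> Uset n)"
proof
  show "dual_Z4 (4 * n) (gray ` range (Fc n A)) \<subseteq> (\<lambda>(w2, w4). Hd n A w2 w4) ` (Uset n \<times> Uset n)"
  proof
    fix w assume "w \<in> dual_Z4 (4 * n) (gray ` range (Fc n A))"
    then have len: "length w = 4 * n" and orth: "\<And>x. sum_list (map2 (*) (gray (Fc n A x)) w) = 0"
      by (auto simp: dual_Z4_def)
    define w2 where "w2 = trn n (\<lambda>i. w ! (n + i))"
    define w4 where "w4 = trn n (\<lambda>i. w ! (3 * n + i))"
    have wsplit: "w = map (\<lambda>i. w ! i) [0..<n] @ map (\<lambda>i. w ! (n + i)) [0..<n] @ map (\<lambda>i. w ! (2 * n + i)) [0..<n] @ map (\<lambda>i. w ! (3 * n + i)) [0..<n]"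
      by (rule nth_equalityI) (auto simp: len nth_append)
    have dot_w: "sum_list (map2 (*) (gray (Fc n A x)) w) = (\<Sum>i<n. snd (x i) * (w ! i + w ! (2 * n + i) + Sa n A w2 w4 i) + fst (x i) * (w ! (2 * n + i) + Sb n A w2 w4 i))" for x
    proof -
      have "sum_list (map2 (*) (gray (Fc n A x)) w) = (\<Sum>i<n. snd (x i) * (w ! i + w ! (2 * n + i) + Sa n A (\<lambda>i. w ! (n + i)) (\<lambda>i. w ! (3 * n + i)) i) + fst (x i) * (w ! (2 * n + i) + Sb n A (\<lambda>i. w ! (n + i)) (\<lambda>i. w ! (3 * n + i)) i))"
        by (subst wsplit) (rule dot_Z4)
      then show ?thesis by (simp add: w2_def w4_def)
    qed
    have gen: "d * (w ! i0 + w ! (2 * n + i0) + Sa n A w2 w4 i0) + c * (w ! (2 * n + i0) + Sb n A w2 w4 i0) = 0"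
      if "i0 < n" for c d i0
    proof -
      let ?x = "\<lambda>i. (if i = i0 then c else 0, if i = i0 then d else 0) :: R"
      have "0 = (\<Sum>i<n. (if i = i0 then d else 0) * (w ! i + w ! (2 * n + i) + Sa n A w2 w4 i) + (if i = i0 then c else 0) * (w ! (2 * n + i) + Sb n A w2 w4 i))"
        using orth[of ?x] dot_w[of ?x] by simp
      also have "\<dots> = d * (w ! i0 + w ! (2 * n + i0) + Sa n A w2 w4 i0) + c * (w ! (2 * n + i0) + Sb n A w2 w4 i0)"
        by (rule sum_delta_pair[OF that])
      finally show ?thesis by simp
    qed
    have b: "w ! (2 * n + i) + Sb n A w2 w4 i = 0" if "i < n" for i using gen[where c=1 and d=0, OF that] by simp
    have a: "w ! i + w ! (2 * n + i) + Sa n A w2 w4 i = 0" if "i < n" for i using gen[where c=0 and d=1, OF that] by simp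
    have "w = Hd n A w2 w4"
    proof (rule nth_equalityI)
      show "length w = length (Hd n A w2 w4)" using len by simp
      fix i assume "i < length w"
      then have i: "i < 4 * n" using len by simp
      show "w ! i = Hd n A w2 w4 ! i"
      proof (cases "i < n")
        case True
        have "w ! i = (w ! i + w ! (2 * n + i) + Sa n A w2 w4 i) - (w ! (2 * n + i) + Sb n A w2 w4 i) + Sb n A w2 w4 i - Sa n A w2 w4 i"
          by (simp add: algebra_simps)
        also have "\<dots> = Sb n A w2 w4 i - Sa n A w2 w4 i" using a[OF True] b[OF True] by simp
        finally show ?thesis using True by (simp add: Hd_def nth_append)
      next
        case False
        then obtain k where k: "i = n + k" using i by (intro that[of "i - n"]) auto
        show ?thesis
        proof (cases "k < n")
          case True then show ?thesis using k by (simp add: Hd_def nth_append w2_def trn_def)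
        next
          case False
          then obtain m where m: "k = n + m" by (intro that[of "k - n"]) auto
          show ?thesis
          proof (cases "m < n")
            case True
            have "w ! (2 * n + m) = - Sb n A w2 w4 m" using b[OF True] by (simp add: eq_neg_iff_add_eq_0)
            then show ?thesis using k m True by (simp add: Hd_def nth_append mult_2 add.assoc)
          next
            case False
            then obtain l where l: "m = n + l" "l < n" using i k m by (intro that[of "m - n"]) auto
            have ii: "i = 3 * n + l" using k m l by simp
            have "Hd n A w2 w4 ! (3 * n + l) = w4 l" by (rule nth_Hd4[OF l(2)])
            then show ?thesis using ii l by (simp add: w4_def trn_def)
          qed
        qed
      qed
    qed
    moreover have "(w2, w4) \<in> Uset n \<times> Uset n" by (simp add: w2_def w4_def)
    ultimately show "w \<in> (\<lambda>(w2, w4). Hd n A w2 w4) ` (Uset n \<times> Uset n)" by force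
  qed
next
  show "(\<lambda>(w2, w4). Hd n A w2 w4) ` (Uset n \<times> Uset n) \<subseteq> dual_Z4 (4 * n) (gray ` range (Fc n A))"
  proof clarify
    fix w2 w4 :: "nat \<Rightarrow> 4"
    have "sum_list (map2 (*) (gray (Fc n A x)) (Hd n A w2 w4)) = 0" for x
    proof -
      have "sum_list (map2 (*) (gray (Fc n A x)) (Hd n A w2 w4)) = (\<Sum>i<n. snd (x i) * ((Sb n A w2 w4 i - Sa n A w2 w4 i) + (- Sb n A w2 w4 i) + Sa n A w2 w4 i) + fst (x i) * ((- Sb n A w2 w4 i) + Sb n A w2 w4 i))"
        unfolding Hd_def by (rule dot_Z4)
      also have "\<dots> = 0" by simp
      finally show ?thesis .
    qed
    then show "Hd n A w2 w4 \<in> dual_Z4 (4 * n) (gray ` range (Fc n A))"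
      unfolding dual_Z4_def by auto
  qed
qed

lemma nth_gray1: "i < length v \<Longrightarrow> gray v ! i = snd (v ! i)" by (simp add: gray_def nth_append)
lemma nth_gray2: "i < length v \<Longrightarrow> gray v ! (length v + i) = fst (v ! i) + snd (v ! i)" by (simp add: gray_def nth_append)

lemma inj_gF: "inj_on (gray \<circ> Fc n A) (Uset n)"
proof (rule inj_onI)
  fix x y assume a: "x \<in> Uset n" "y \<in> Uset n" and e: "(gray \<circ> Fc n A) x = (gray \<circ> Fc n A) y"
  have "x i = y i" if "i < n" for i
  proof -
    have i2: "i < length (Fc n A x)" "i < length (Fc n A y)" using that by auto
    have 1: "snd (x i) = snd (y i)" using nth_gray1[OF i2(1)] nth_gray1[OF i2(2)] e nth_Fc1[OF that] by simp
    have "fst (x i) + snd (x i) = fst (y i) + snd (y i)"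
      using nth_gray2[OF i2(1)] nth_gray2[OF i2(2)] e nth_Fc1[OF that] by simp
    with 1 show ?thesis by (simp add: prod_eq_iff)
  qed
  then show "x = y" using a by (intro U_eqI) auto
qed

lemma inj_Hd: "inj_on (\<lambda>(w2, w4). Hd n A w2 w4) (Uset n \<times> Uset n)"
proof (rule inj_onI, clarify)
  fix w2 w4 w2' w4' assume a: "w2 \<in> Uset n" "w4 \<in> Uset n" "w2' \<in> Uset n" "w4' \<in> Uset n"
    and e: "Hd n A w2 w4 = Hd n A w2' w4'"
  have "w2 i = w2' i" if "i < n" for i using nth_Hd2[OF that, of A w2 w4] nth_Hd2[OF that, of A w2' w4'] e by simp
  then have 1: "w2 = w2'" using a by (intro U_eqI) auto
  have "w4 i = w4' i" if "i < n" for i using nth_Hd4[OF that, of A w2 w4] nth_Hd4[OF that, of A w2' w4'] e by simp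
  then have "w4 = w4'" using a by (intro U_eqI) auto
  with 1 show "w2 = w2' \<and> w4 = w4'" by simp
qed

lemma lee_wt_Z4_append[simp]: "lee_wt_Z4 (xs @ ys) = lee_wt_Z4 xs + lee_wt_Z4 ys"
  by (simp add: lee_wt_Z4_def)
lemma lee_wt_Z4_map: "lee_wt_Z4 (map f [0..<n]) = (\<Sum>i<n. lee_Z4 (f i))"
  by (simp add: lee_wt_Z4_def sl_map[symmetric] o_def)

lemma lee_Z4_neg2[simp]: "lee_Z4 (- a - b) = lee_Z4 (a + b)"
proof -
  have "- a - b = - (a + b)" by simp
  then show ?thesis by (simp only: lee_Z4_neg)
qed

lemma wt_Z4_pi:
  assumes "tsim n A \<pi>"
  shows "lee_wt_Z4 (Hd n A (\<lambda>i. - snd (x (\<pi> i))) (\<lambda>i. fst (x (\<pi> i)) + snd (x (\<pi> i)))) = lee_wt_Z4 (gray (Fc n A x))"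
proof -
  have p: "\<forall>i<n. \<pi> i < n \<and> \<pi> (\<pi> i) = i" using assms by (simp add: tsim_def)
  let ?w2 = "\<lambda>i. - snd (x (\<pi> i))" and ?w4 = "\<lambda>i. fst (x (\<pi> i)) + snd (x (\<pi> i))"
  let ?y = "\<lambda>j. x (\<pi> j)"
  have Sa: "Sa n A ?w2 ?w4 i = fst (mv n A ?y i)" for i
    unfolding Sa_def mv_def fst_sum by (rule sum.cong) (simp_all add: rmul_def algebra_simps)
  have Sb1: "Sb n A ?w2 ?w4 i = (\<Sum>j<n. fst (A i j) * fst (?y j) + (fst (A i j) * snd (?y j) + snd (A i j) * fst (?y j)))" for i
    unfolding Sb_def by (rule sum.cong) (simp_all add: algebra_simps)
  have Sb: "Sb n A ?w2 ?w4 i = fst (mv n A ?y i) + snd (mv n A ?y i)" for i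
    unfolding Sb1 by (simp add: mv_def fst_sum snd_sum rmul_def sum.distrib)
  have e1: "(\<Sum>i<n. lee_Z4 (Sb n A ?w2 ?w4 i - Sa n A ?w2 ?w4 i)) = (\<Sum>i<n. lee_Z4 (snd (vm n x A i)))"
  proof -
    have "(\<Sum>i<n. lee_Z4 (Sb n A ?w2 ?w4 i - Sa n A ?w2 ?w4 i)) = (\<Sum>i<n. lee_Z4 (snd (vm n x A (\<pi> i))))"
      by (rule sum.cong) (simp_all add: Sa Sb mv_pi[OF assms])
    also have "\<dots> = (\<Sum>i<n. lee_Z4 (snd (vm n x A i)))" by (rule sum_pi[OF p])
    finally show ?thesis .
  qed
  have e3: "(\<Sum>i<n. lee_Z4 (- Sb n A ?w2 ?w4 i)) = (\<Sum>i<n. lee_Z4 (fst (vm n x A i) + snd (vm n x A i)))"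
  proof -
    have "(\<Sum>i<n. lee_Z4 (- Sb n A ?w2 ?w4 i)) = (\<Sum>i<n. lee_Z4 (fst (vm n x A (\<pi> i)) + snd (vm n x A (\<pi> i))))"
      by (rule sum.cong) (simp_all add: Sb mv_pi[OF assms])
    also have "\<dots> = (\<Sum>i<n. lee_Z4 (fst (vm n x A i) + snd (vm n x A i)))" by (rule sum_pi[OF p])
    finally show ?thesis .
  qed
  have e2: "(\<Sum>i<n. lee_Z4 (?w2 i)) = (\<Sum>i<n. lee_Z4 (snd (x i)))"
    using sum_pi[OF p, of "\<lambda>i. lee_Z4 (snd (x i))"] by simp
  have e4: "(\<Sum>i<n. lee_Z4 (?w4 i)) = (\<Sum>i<n. lee_Z4 (fst (x i) + snd (x i)))"
    by (rule sum_pi[OF p])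
  have "lee_wt_Z4 (Hd n A ?w2 ?w4) = (\<Sum>i<n. lee_Z4 (snd (vm n x A i))) + ((\<Sum>i<n. lee_Z4 (snd (x i))) + ((\<Sum>i<n. lee_Z4 (fst (vm n x A i) + snd (vm n x A i))) + (\<Sum>i<n. lee_Z4 (fst (x i) + snd (x i)))))"
    unfolding Hd_def lee_wt_Z4_append lee_wt_Z4_map e1 e2 e3 e4 ..
  also have "\<dots> = lee_wt_Z4 (gray (Fc n A x))"
    unfolding lee_wt_gray Fc_def lee_wt_R_append lee_wt_R_map lee_R_def sum.distrib by simp
  finally show ?thesis .
qed



lemma fsd_Z4:
  assumes "tsim n A \<pi>"
  shows "formally_self_dual_Z4 (4 * n) (gray ` range (Fc n A))"
proof -
  have p: "\<forall>i<n. \<pi> i < n \<and> \<pi> (\<pi> i) = i" using assms by (simp add: tsim_def)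
  define p2 where "p2 = (\<lambda>x::nat \<Rightarrow> R. (trn n (\<lambda>i. - snd (x (\<pi> i))), trn n (\<lambda>i. fst (x (\<pi> i)) + snd (x (\<pi> i)))))"
  define q2 where "q2 = (\<lambda>(w2::nat \<Rightarrow> 4, w4::nat \<Rightarrow> 4). trn n (\<lambda>i. (w4 (\<pi> i) + w2 (\<pi> i), - w2 (\<pi> i))) :: nat \<Rightarrow> R)"
  have p2U: "p2 x \<in> Uset n \<times> Uset n" for x by (simp add: p2_def)
  have q2U: "q2 w \<in> Uset n" for w by (simp add: q2_def split: prod.splits)
  have qp: "q2 (p2 x) = x" if "x \<in> Uset n" for x
  proof (rule U_eqI[OF q2U that])
    fix i assume "i < n"
    then show "q2 (p2 x) i = x i" using p by (simp add: q2_def p2_def trn_def prod_eq_iff)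
  qed
  have pq: "p2 (q2 w) = w" if "w \<in> Uset n \<times> Uset n" for w
  proof -
    obtain w2 w4 where w0: "w = (w2, w4)" by (cases w)
    have w: "w = (w2, w4)" "w2 \<in> Uset n" "w4 \<in> Uset n" using that w0 by auto
    have 1: "fst (p2 (q2 w)) = w2"
    proof (rule U_eqI)
      show "fst (p2 (q2 w)) \<in> Uset n" using p2U by (simp add: mem_Times_iff)
      fix i assume "i < n"
      then show "fst (p2 (q2 w)) i = w2 i" using p w by (simp add: q2_def p2_def trn_def)
    qed (use w in simp)
    have 2: "snd (p2 (q2 w)) = w4"
    proof (rule U_eqI)
      show "snd (p2 (q2 w)) \<in> Uset n" using p2U by (simp add: mem_Times_iff)
      fix i assume "i < n"
      then show "snd (p2 (q2 w)) i = w4 i" using p w by (simp add: q2_def p2_def trn_def)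
    qed (use w in simp)
    show ?thesis using 1 2 by (simp add: prod_eq_iff w(1))
  qed
  have bij: "bij_betw p2 (Uset n) (Uset n \<times> Uset n)"
  proof (rule bij_betw_byWitness[where f'=q2])
    show "\<forall>a\<in>Uset n. q2 (p2 a) = a" using qp by blast
    show "\<forall>a'\<in>Uset n \<times> Uset n. p2 (q2 a') = a'" using pq by blast
    show "p2 ` Uset n \<subseteq> Uset n \<times> Uset n" using p2U by blast
    show "q2 ` (Uset n \<times> Uset n) \<subseteq> Uset n" using q2U by blast
  qed
  have wq: "\<forall>u\<in>Uset n. lee_wt_Z4 ((\<lambda>(w2, w4). Hd n A w2 w4) (p2 u)) = lee_wt_Z4 ((gray \<circ> Fc n A) u)"
    unfolding p2_def using wt_Z4_pi[OF assms] by simp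
  have img: "gray ` range (Fc n A) = (gray \<circ> Fc n A) ` Uset n" by (simp add: range_Fc image_comp)
  have lin: "linear_code_Z4 (4 * n) (gray ` range (Fc n A))"
    using lin_gray[OF lin_R[of n A]] by (simp add: mult.assoc)
  show ?thesis unfolding formally_self_dual_Z4_def
  proof (intro conjI allI)
    show "linear_code_Z4 (4 * n) (gray ` range (Fc n A))" by (rule lin)
    fix w
    show "card {c \<in> gray ` range (Fc n A). lee_wt_Z4 c = w} = card {c \<in> dual_Z4 (4 * n) (gray ` range (Fc n A)). lee_wt_Z4 c = w}"
      unfolding dual_Z4_eq unfolding img
      by (rule card_transfer[of "gray \<circ> Fc n A" "Uset n" "\<lambda>(w2, w4). Hd n A w2 w4" "Uset n \<times> Uset n" p2 lee_wt_Z4 lee_wt_Z4, OF inj_gF inj_Hd bij wq])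
  qed
qed

lemma circ_formula:
  assumes c: "circulant_mat n A"
  shows "i < n \<Longrightarrow> j < n \<Longrightarrow> A i j = A 0 ((j + n - i) mod n)"
proof (induct i arbitrary: j)
  case 0
  then show ?case by simp
next
  case (Suc i)
  define j' where "j' = (if j = 0 then n - 1 else j - 1)"
  have j': "j' < n" using Suc by (auto simp: j'_def)
  have jj: "(j' + 1) mod n = j" using Suc by (auto simp: j'_def)
  have "A (Suc i) j = A i j'"
    using c Suc.prems j' jj unfolding circulant_mat_def by (metis Suc_eq_plus1)
  also have "\<dots> = A 0 ((j' + n - i) mod n)" using Suc j' by simp
  also have "(j' + n - i) mod n = (j + n - Suc i) mod n"
  proof (cases "j = 0")
    case True
    then have "j' + n - i = (n - Suc i) + n" using Suc by (simp add: j'_def)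
    then show ?thesis using True by simp
  next
    case False
    then have "j' + n - i = j + n - Suc i" using Suc by (simp add: j'_def)
    then show ?thesis by simp
  qed
  finally show ?case .
qed

lemma circ_tsim:
  assumes "circulant_mat n A"
  shows "tsim n A (\<lambda>i. if i = 0 then 0 else n - i)"
  unfolding tsim_def
proof (intro conjI allI impI)
  fix i assume "i < n"
  then show "(if i = 0 then 0 else n - i) < n" by auto
  show "(if (if i = 0 then 0 else n - i) = 0 then 0 else n - (if i = 0 then 0 else n - i)) = i"
    using \<open>i < n\<close> by auto
  fix j assume "j < n"
  let ?pi = "if i = 0 then 0 else n - i" and ?pj = "if j = 0 then 0 else n - j"
  have pi: "?pi < n" and pj: "?pj < n" using \<open>i < n\<close> \<open>j < n\<close> by auto
  have "A ?pi ?pj = A 0 ((?pj + n - ?pi) mod n)" by (rule circ_formula[OF assms pi pj])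
  also have "(?pj + n - ?pi) mod n = (i + n - j) mod n"
  proof (cases "i = 0")
    case True
    show ?thesis
    proof (cases "j = 0")
      case True then show ?thesis using \<open>i = 0\<close> by simp
    next
      case False
      then have "?pj + n - ?pi = (n - j) + n" using \<open>i = 0\<close> by simp
      then show ?thesis using \<open>i = 0\<close> by simp
    qed
  next
    case False
    show ?thesis
    proof (cases "j = 0")
      case True
      then have "?pj + n - ?pi = i" using \<open>i \<noteq> 0\<close> \<open>i < n\<close> by simp
      then show ?thesis using True by simp
    next
      case False
      then have "?pj + n - ?pi = i + n - j" using \<open>i \<noteq> 0\<close> \<open>i < n\<close> \<open>j < n\<close> by simp
      then show ?thesis by simp
    qed
  qed
  also have "A 0 ((i + n - j) mod n) = A j i" by (rule circ_formula[OF assms \<open>j < n\<close> \<open>i < n\<close>, symmetric])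
  finally show "A ?pi ?pj = A j i" .
qed

lemma sym_tsim: "symmetric_mat n A \<Longrightarrow> tsim n A (\<lambda>i. i)"
  unfolding tsim_def symmetric_mat_def by auto

theorem corollary5p3:
  fixes n :: nat and A :: "nat \<Rightarrow> nat \<Rightarrow> R" and C :: "R list set"
  assumes "C = generated_code_R n (2 * n) (id_concat n A)"
    and "symmetric_mat n A \<or> circulant_mat n A"
  shows "formally_self_dual_R (2 * n) C \<and> formally_self_dual_Z4 (4 * n) (gray ` C)"
proof -
  obtain \<pi> where t: "tsim n A \<pi>" using assms(2) sym_tsim circ_tsim by blast
  have C: "C = range (Fc n A)" using assms(1) code_eq by simp
  show ?thesis unfolding C using fsd_R[OF t] fsd_Z4[OF t] by simp
qed


end
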